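(* Let $\mathcal{M}$ be a CTMC with states $s_1,\dots,s_n$ ($n=|S|$), $s_1$ the initial state, $E(s)=1$ for all states, and $s_n=g$ a unique absorbing goal state; let $\delta>0$, $c=e^{\delta}$, $\mathcal{M}'=c\cdot\mathcal{M}$, $t\geq0$. Suppose the transition probability matrix is diagonalizable, $\mathbf{P}=\mathbf{S}\mathbf{D}\mathbf{S}^{-1}$, as below. Then $$\left|\mathrm{Pr}^{\mathcal{M}'}(\lozenge^{\leq t}g)-\mathrm{Pr}^{\mathcal{M}}(\lozenge^{\leq t}g)\right|\leq(n-a_{\mathbf{P}})\cdot C\cdot\sum_{k=1}^{\infty}|\lambda|^{k-1}\cdot\mathrm{Diff}_t(\mathcal{E}_k),$$ where $C=\max_{i=a_{\mathbf{P}}+1,\dots,n}\left|\mathbf{S}_{1,i}\cdot\mathbf{S}^{-1}_{i,n}\cdot(\lambda_i-1)\right|$.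
   Context: In a CTMC the process stays in $s$ an exponential time with rate $E(s)$, then jumps to $s'$ with probability $P(s,s')$; $c\cdot\mathcal{M}$ multiplies all exit rates by $c$; $\mathrm{Pr}^{\mathcal{M}}(\lozenge^{\leq t}g)$ is the probability of reaching $g$ from the initial state within time $t$. Standing assumption: states from which $g$ is unreachable are collapsed into a single absorbing fail state, so $\mathcal{M}$ has at most two absorbing states, one of which is reached almost surely. $\mathbf{P}_{i,j}=P(s_i,s_j)$; $a_{\mathbf{P}}\in\{1,2\}$ is the multiplicity of eigenvalue $1$ of $\mathbf{P}$. $\mathbf{D}$ is diagonal with diagonal entries $\lambda_1,\dots,\lambda_n$, the eigenvalues of $\mathbf{P}$ repeated according to multiplicity, in descending order of modulus, so $\lambda_1=\dots=\lambda_{a_{\mathbf{P}}}=1$; $\mathbf{S}$ is invertible. $\lambda$ denotes the eigenvalue of second largest modulus, $\lambda=\lambda_{a_{\mathbf{P}}+1}$. The Erlang CTMC $\mathcal{E}_k$ has states $s_0,\dots,s_{k-1},g$, initial state $s_0$, all exit rates $1$, a deterministic chain $s_0\to s_1\to\dots\to s_{k-1}\to g$ with $g$ absorbing and labeled differently from the equally labeled others; $\mathrm{Diff}_t(\mathcal{E}_k)=|\mathrm{Pr}^{\mathcal{E}_k}(\lozenge^{\leq t}g)-\mathrm{Pr}^{c\cdot\mathcal{E}_k}(\lozenge^{\leq t}g)|$. *)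

theory Defs
  imports "Jordan_Normal_Form.Char_Poly"
begin

text \<open>States are indexed 0,...,n-1 (paper's s_1,...,s_n are 0,...,n-1).
  A CTMC on n states is given by exit rates E and an embedded transition
  probability matrix P (a real n x n matrix).\<close>

definition make_absorbing :: "nat \<Rightarrow> real mat \<Rightarrow> nat \<Rightarrow> real mat" where
  "make_absorbing n P g = mat n n (\<lambda>(i,j). if i = g then (if j = g then 1 else 0) else P $$ (i,j))"

definition generator :: "nat \<Rightarrow> (nat \<Rightarrow> real) \<Rightarrow> real mat \<Rightarrow> real mat" where
  "generator n E P = mat n n (\<lambda>(i,j). E i * (P $$ (i,j) - (if i = j then 1 else 0)))"

definition mat_exp_entry :: "real mat \<Rightarrow> real \<Rightarrow> nat \<Rightarrow> nat \<Rightarrow> real" where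
  "mat_exp_entry Q t i j = (\<Sum>k. t ^ k / fact k * (Q ^\<^sub>m k) $$ (i,j))"

text \<open>Time-bounded reachability Pr(reach g within t) from initial state s0:
  probability of being in g at time t in the CTMC where g is made absorbing.\<close>
definition ctmc_reach :: "nat \<Rightarrow> (nat \<Rightarrow> real) \<Rightarrow> real mat \<Rightarrow> nat \<Rightarrow> nat \<Rightarrow> real \<Rightarrow> real" where
  "ctmc_reach n E P s0 g t = mat_exp_entry (generator n E (make_absorbing n P g)) t s0 g"

definition scale_rates :: "real \<Rightarrow> (nat \<Rightarrow> real) \<Rightarrow> nat \<Rightarrow> real" where
  "scale_rates c E = (\<lambda>s. c * E s)"

text \<open>Erlang CTMC E_k: states s_0..s_{k-1} are 0..k-1, goal g is k; rates 1.\<close>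
definition erlang_P :: "nat \<Rightarrow> real mat" where
  "erlang_P k = mat (Suc k) (Suc k) (\<lambda>(i,j). if (i < k \<and> j = Suc i) \<or> (i = k \<and> j = k) then 1 else 0)"

definition Diff_erlang :: "real \<Rightarrow> real \<Rightarrow> nat \<Rightarrow> real" where
  "Diff_erlang c t k = \<bar>ctmc_reach (Suc k) (\<lambda>_. 1) (erlang_P k) 0 k t
                        - ctmc_reach (Suc k) (scale_rates c (\<lambda>_. 1)) (erlang_P k) 0 k t\<bar>"

definition reachable :: "nat \<Rightarrow> real mat \<Rightarrow> nat \<Rightarrow> nat \<Rightarrow> bool" where
  "reachable n P i j \<longleftrightarrow> (i, j) \<in> {(a,b). a < n \<and> b < n \<and> P $$ (a,b) > 0}\<^sup>*"

end

theory Submission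
  imports Defs
begin
lemma pascal_diff:
  fixes x :: "nat \<Rightarrow> real"
  shows "(\<Sum>l\<le>Suc k. of_nat (Suc k choose l) * (-1)^(Suc k-l) * x l)
    = (\<Sum>l\<le>k. of_nat (k choose l) * (-1)^(k-l) * x (Suc l)) - (\<Sum>l\<le>k. of_nat (k choose l) * (-1)^(k-l) * x l)"
proof -
  have e1: "(\<Sum>l\<le>Suc k. of_nat (Suc k choose l) * (-1)^(Suc k-l) * x l)
     = (-1)^(Suc k) * x 0 + (\<Sum>i\<le>k. of_nat (k choose i) * (-1)^(k-i) * x (Suc i))
       + (\<Sum>i\<le>k. of_nat (k choose Suc i) * (-1)^(k-i) * x (Suc i))"
    by (simp add: sum.atMost_Suc_shift sum.distrib algebra_simps del: sum.atMost_Suc)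
  have e2: "(\<Sum>l\<le>k. of_nat (k choose l) * (-1)^(k-l) * x l)
     = (-1)^k * x 0 + (\<Sum>i<k. of_nat (k choose Suc i) * (-1)^(k - Suc i) * x (Suc i))"
    by (cases k) (simp_all add: sum.atMost_Suc_shift lessThan_Suc_atMost del: sum.atMost_Suc)
  have e3: "(\<Sum>i\<le>k. of_nat (k choose Suc i) * (-1)^(k-i) * x (Suc i))
      = - (\<Sum>i<k. of_nat (k choose Suc i) * (-1)^(k - Suc i) * x (Suc i))"
  proof -
    have "(\<Sum>i\<le>k. of_nat (k choose Suc i) * (-1)^(k-i) * x (Suc i))
        = (\<Sum>i<k. of_nat (k choose Suc i) * (-1)^(k-i) * x (Suc i))"
      by (simp add: lessThan_Suc_atMost[symmetric])
    also have "\<dots> = (\<Sum>i<k. - (of_nat (k choose Suc i) * (-1)^(k - Suc i) * x (Suc i)))"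
    proof (rule sum.cong[OF refl])
      fix i assume "i \<in> {..<k}"
      then have "k - i = Suc (k - Suc i)" by auto
      then show "of_nat (k choose Suc i) * (-1)^(k-i) * x (Suc i) = - (of_nat (k choose Suc i) * (-1)^(k - Suc i) * x (Suc i))"
        by simp
    qed
    finally show ?thesis by (simp add: sum_negf)
  qed
  show ?thesis unfolding e1 e2 e3 by simp
qed
lemma mult_entry:
  fixes X B :: "'a::comm_semiring_1 mat"
  assumes "X \<in> carrier_mat n n" "B \<in> carrier_mat n n" "i < n" "j < n"
  shows "(X * B) $$ (i,j) = (\<Sum>r<n. X $$ (i,r) * B $$ (r,j))"
  using assms by (simp add: scalar_prod_def atLeast0LessThan)

lemma smult_pow_mat:
  fixes X :: "'a::comm_semiring_1 mat"
  assumes X: "X \<in> carrier_mat n n"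
  shows "(r \<cdot>\<^sub>m X) ^\<^sub>m k = (r ^ k) \<cdot>\<^sub>m (X ^\<^sub>m k)"
proof (induction k)
  case 0 then show ?case using X by (auto intro!: eq_matI)
next
  case (Suc k)
  have "(r \<cdot>\<^sub>m X) ^\<^sub>m Suc k = ((r ^ k) \<cdot>\<^sub>m (X ^\<^sub>m k)) * (r \<cdot>\<^sub>m X)" using Suc by simp
  also have "\<dots> = (r ^ k) \<cdot>\<^sub>m ((X ^\<^sub>m k) * (r \<cdot>\<^sub>m X))"
    by (rule mult_smult_assoc_mat[OF pow_carrier_mat[OF X]]) (use X in auto)
  also have "\<dots> = (r ^ k) \<cdot>\<^sub>m (r \<cdot>\<^sub>m ((X ^\<^sub>m k) * X))"
    using mult_smult_distrib[OF pow_carrier_mat[OF X] X] by simp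
  also have "\<dots> = (r ^ Suc k) \<cdot>\<^sub>m (X ^\<^sub>m Suc k)"
    by (rule eq_matI) (auto simp: ac_simps)
  finally show ?case .
qed

lemma binom_entry:
  fixes B :: "real mat"
  assumes B: "B \<in> carrier_mat n n" and i: "i < n"
  shows "j < n \<Longrightarrow> ((B - 1\<^sub>m n) ^\<^sub>m k) $$ (i,j) = (\<Sum>l\<le>k. of_nat (k choose l) * (-1)^(k-l) * (B ^\<^sub>m l) $$ (i,j))"
proof (induction k arbitrary: j)
  case 0 then show ?case using B i by simp
next
  case (Suc k)
  let ?X = "(B - 1\<^sub>m n) ^\<^sub>m k"
  let ?c = "\<lambda>l. of_nat (k choose l) * (-1::real)^(k-l)"
  have X: "?X \<in> carrier_mat n n" using B by auto
  have "?X * (B - 1\<^sub>m n) = ?X * B - ?X * 1\<^sub>m n" by (rule mult_minus_distrib_mat[OF X B one_carrier_mat])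
  also have "\<dots> = ?X * B - ?X" using X by simp
  finally have e: "((B - 1\<^sub>m n) ^\<^sub>m Suc k) $$ (i,j) = (?X * B) $$ (i,j) - ?X $$ (i,j)"
    using X B i Suc.prems by simp
  have "(?X * B) $$ (i,j) = (\<Sum>r<n. ?X $$ (i,r) * B $$ (r,j))"
    by (rule mult_entry[OF X B i Suc.prems])
  also have "\<dots> = (\<Sum>r<n. (\<Sum>l\<le>k. ?c l * (B ^\<^sub>m l) $$ (i,r)) * B $$ (r,j))"
    using Suc.IH by simp
  also have "\<dots> = (\<Sum>l\<le>k. ?c l * (\<Sum>r<n. (B ^\<^sub>m l) $$ (i,r) * B $$ (r,j)))"
    by (simp add: sum_distrib_left sum_distrib_right sum.swap[of _ "{..<n}"] mult.assoc)
  also have "\<dots> = (\<Sum>l\<le>k. ?c l * (B ^\<^sub>m Suc l) $$ (i,j))"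
    using mult_entry[OF pow_carrier_mat[OF B] B i Suc.prems] by simp
  finally show ?case unfolding e pascal_diff using Suc.IH[OF Suc.prems] by simp
qed

definition poi :: "real \<Rightarrow> nat \<Rightarrow> real" where
  "poi s m = exp (- s) * s ^ m / fact m"

lemma exp_sums_real: "(\<lambda>m. (x::real) ^ m / fact m) sums exp x"
  using exp_converges[of x] by (simp add: divide_inverse_commute scaleR_conv_of_real mult.commute)

lemma poisson_rep:
  fixes A :: "real mat"
  assumes A: "A \<in> carrier_mat n n" and i: "i < n" and j: "j < n"
    and bnd: "\<And>m. \<bar>(A ^\<^sub>m m) $$ (i,j)\<bar> \<le> M"
  shows "(\<lambda>m. poi (r*t) m * (A ^\<^sub>m m) $$ (i,j)) sums mat_exp_entry (generator n (\<lambda>_. r) A) t i j"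
proof -
  define s where "s = r * t"
  define x where "x = (\<lambda>m. (A ^\<^sub>m m) $$ (i,j))"
  define a where "a = (\<lambda>l. s ^ l / fact l * x l)"
  define b where "b = (\<lambda>l. (- s) ^ l / fact l)"
  have gen: "generator n (\<lambda>_. r) A = r \<cdot>\<^sub>m (A - 1\<^sub>m n)"
    unfolding generator_def by (rule eq_matI) (use A in auto)
  have B1: "A - 1\<^sub>m n \<in> carrier_mat n n" using A by auto
  have ex: "exp (\<bar>s\<bar>) = (\<Sum>l. \<bar>s\<bar> ^ l / fact l)" using exp_sums_real sums_unique by blast
  have sabs: "summable (\<lambda>l. \<bar>s\<bar> ^ l / fact l)" using exp_sums_real sums_summable by blast
  have na: "summable (\<lambda>l. norm (a l))"
  proof (rule summable_comparison_test[OF _ summable_mult[OF sabs, of M]])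
    have "norm (norm (a l)) \<le> M * (\<bar>s\<bar> ^ l / fact l)" for l
    proof -
      have "norm (norm (a l)) = \<bar>s\<bar> ^ l / fact l * \<bar>x l\<bar>"
        unfolding a_def by (simp add: abs_mult power_abs)
      also have "\<dots> \<le> \<bar>s\<bar> ^ l / fact l * M"
        by (rule mult_left_mono) (use bnd in \<open>auto simp: x_def\<close>)
      finally show ?thesis by (simp add: mult.commute)
    qed
    then show "\<exists>N. \<forall>l\<ge>N. norm (norm (a l)) \<le> M * (\<bar>s\<bar> ^ l / fact l)" by blast
  qed
  have nb: "summable (\<lambda>l. norm (b l))" using sabs unfolding b_def by (simp add: power_abs)
  have sb: "b sums exp (- s)" unfolding b_def by (rule exp_sums_real)
  have cp: "(\<lambda>k. \<Sum>l\<le>k. a l * b (k - l)) sums (suminf a * suminf b)"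
    by (rule Cauchy_product_sums[OF na nb])
  have trm: "(\<Sum>l\<le>k. a l * b (k - l)) = t ^ k / fact k * (generator n (\<lambda>_. r) A ^\<^sub>m k) $$ (i, j)" for k
  proof -
    have "(generator n (\<lambda>_. r) A ^\<^sub>m k) $$ (i, j) = r ^ k * ((A - 1\<^sub>m n) ^\<^sub>m k) $$ (i,j)"
      unfolding gen smult_pow_mat[OF B1] using i j A by simp
    also have "\<dots> = r ^ k * (\<Sum>l\<le>k. of_nat (k choose l) * (-1)^(k-l) * x l)"
      unfolding x_def using binom_entry[OF A i j] by simp
    finally have g: "t ^ k / fact k * (generator n (\<lambda>_. r) A ^\<^sub>m k) $$ (i, j)
       = (\<Sum>l\<le>k. s ^ k / fact k * of_nat (k choose l) * (-1)^(k-l) * x l)"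
      by (simp add: s_def power_mult_distrib sum_distrib_left mult_ac)
    show ?thesis unfolding g
    proof (rule sum.cong[OF refl])
      fix l assume "l \<in> {..k}"
      then have lk: "l \<le> k" by simp
      have sp: "s ^ k = s ^ l * s ^ (k - l)" using lk by (simp add: power_add[symmetric])
      have "(-s) ^ (k - l) = (-1) ^ (k - l) * s ^ (k - l)" by (rule power_minus)
      note m = this
      show "a l * b (k - l) = s ^ k / fact k * of_nat (k choose l) * (-1)^(k-l) * x l"
        unfolding a_def b_def sp binomial_fact[OF lk] m by (simp add: field_simps)
    qed
  qed
  have me: "mat_exp_entry (generator n (\<lambda>_. r) A) t i j = suminf a * exp (- s)"
    unfolding mat_exp_entry_def using cp sums_unique[OF sb] trm by (simp add: sums_iff)
  have "(\<lambda>m. exp (- s) * a m) sums (exp (- s) * suminf a)"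
    by (rule sums_mult[OF summable_sums[OF summable_norm_cancel[OF na]]])
  moreover have "(\<lambda>m. exp (- s) * a m) = (\<lambda>m. poi (r*t) m * (A ^\<^sub>m m) $$ (i,j))"
    by (auto simp: poi_def a_def x_def s_def)
  ultimately show ?thesis unfolding me by (simp add: mult.commute)
qed


lemma poi_nonneg: "s \<ge> 0 \<Longrightarrow> poi s m \<ge> 0"
  unfolding poi_def by simp

lemma poi_sums: "poi s sums 1"
proof -
  have "(\<lambda>m. exp (- s) * (s ^ m / fact m)) sums (exp (- s) * exp s)"
    by (rule sums_mult[OF exp_sums_real])
  moreover have "poi s = (\<lambda>m. exp (- s) * (s ^ m / fact m))" by (auto simp: poi_def)
  moreover have "exp (- s) * exp s = 1" by (simp add: exp_minus_inverse mult.commute)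
  ultimately show ?thesis by simp
qed

definition tl_poi :: "real \<Rightarrow> nat \<Rightarrow> real" where
  "tl_poi s j = 1 - (\<Sum>m\<le>j. poi s m)"

lemma tl_poi_sums: "(\<lambda>l. poi s (l + Suc j)) sums tl_poi s j"
proof -
  have "poi s sums (tl_poi s j + (\<Sum>i<Suc j. poi s i))"
    using poi_sums by (simp add: tl_poi_def lessThan_Suc_atMost)
  then show ?thesis using sums_iff_shift[of "poi s" "Suc j" "tl_poi s j"] by blast
qed

lemma tl_poi_nonneg: "s \<ge> 0 \<Longrightarrow> tl_poi s j \<ge> 0"
  using sums_unique[OF tl_poi_sums[of s j]] suminf_nonneg[OF sums_summable[OF tl_poi_sums[of s j]]]
    poi_nonneg by simp

lemma tl_poi_le: assumes s: "s \<ge> 0" shows "tl_poi s j \<le> s ^ Suc j / fact (Suc j)"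
proof -
  have le: "poi s (l + Suc j) \<le> s ^ Suc j / fact (Suc j) * poi s l" for l
  proof -
    have d: "fact l * fact (Suc j) \<le> (fact (l + Suc j) :: nat)"
      by (rule dvd_imp_le[OF fact_fact_dvd_fact]) simp
    have d': "(fact l * fact (Suc j) :: real) \<le> fact (l + Suc j)"
      using d by (metis of_nat_fact of_nat_le_iff of_nat_mult)
    have "poi s (l + Suc j) = exp (- s) * s ^ l * s ^ Suc j / fact (l + Suc j)"
      by (simp add: poi_def power_add)
    also have "\<dots> \<le> exp (- s) * s ^ l * s ^ Suc j / (fact l * fact (Suc j))"
      by (rule divide_left_mono[OF d']) (use s in auto)
    also have "\<dots> = s ^ Suc j / fact (Suc j) * poi s l"
      by (simp add: poi_def field_simps)
    finally show ?thesis .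
  qed
  have "tl_poi s j = (\<Sum>l. poi s (l + Suc j))" using sums_unique[OF tl_poi_sums] by simp
  also have "\<dots> \<le> (\<Sum>l. s ^ Suc j / fact (Suc j) * poi s l)"
    by (rule suminf_le[OF le sums_summable[OF tl_poi_sums] summable_mult[OF sums_summable[OF poi_sums]]])
  also have "\<dots> = s ^ Suc j / fact (Suc j)"
    using suminf_mult[OF sums_summable[OF poi_sums], of "s ^ Suc j / fact (Suc j)"] sums_unique[OF poi_sums]
    by simp
  finally show ?thesis .
qed

lemma tl_poi_summable: assumes s: "s \<ge> 0" shows "summable (tl_poi s)"
proof (rule summable_comparison_test[of _ "\<lambda>j. s ^ Suc j / fact (Suc j)"])
  show "\<exists>N. \<forall>j\<ge>N. norm (tl_poi s j) \<le> s ^ Suc j / fact (Suc j)"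
    using tl_poi_nonneg[OF s] tl_poi_le[OF s] by auto
  have "summable (\<lambda>j. s ^ (j + 1) / fact (j + 1))"
    using summable_iff_shift[of "\<lambda>j. s ^ j / fact j" 1] sums_summable[OF exp_sums_real] by simp
  then show "summable (\<lambda>j. s ^ Suc j / fact (Suc j))" by simp
qed

lemma tl_poi_Suc: "tl_poi s (Suc N) = tl_poi s N - poi s (Suc N)"
  by (simp add: tl_poi_def)

lemma tl_poi_lim: "tl_poi s \<longlonglongrightarrow> 0"
proof -
  have "(\<lambda>N. \<Sum>m\<le>N. poi s m) \<longlonglongrightarrow> 1"
    using summable_LIMSEQ'[OF sums_summable[OF poi_sums]] sums_unique[OF poi_sums] by simp
  then have "(\<lambda>N. 1 - (\<Sum>m\<le>N. poi s m)) \<longlonglongrightarrow> 1 - 1"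
    by (intro tendsto_diff tendsto_const)
  then show ?thesis by (simp add: tl_poi_def[abs_def])
qed

lemma tele:
  fixes z :: complex
  assumes z: "cmod z \<le> 1" and s: "s \<ge> 0"
  shows "(\<lambda>j. (z - 1) * z ^ j * of_real (tl_poi s j)) sums (\<Sum>m. of_real (poi s m) * (z ^ m - 1))"
proof -
  let ?p = "\<lambda>m. complex_of_real (poi s m)"
  let ?T = "\<lambda>j. complex_of_real (tl_poi s j)"
  have part: "(\<Sum>j<N. (z - 1) * z ^ j * ?T j) = (\<Sum>m\<le>N. ?p m * (z ^ m - 1)) + (z ^ N - 1) * ?T N" for N
  proof (induction N)
    case 0 then show ?case by simp
  next
    case (Suc N)
    have T: "?T N = ?p (Suc N) + ?T (Suc N)" by (simp add: tl_poi_Suc)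
    show ?case unfolding sum.lessThan_Suc Suc sum.atMost_Suc T by (simp add: algebra_simps)
  qed
  have sp: "summable (\<lambda>m. ?p m * (z ^ m - 1))"
  proof (rule summable_comparison_test[of _ "\<lambda>m. 2 * poi s m"])
    have "norm (?p m * (z ^ m - 1)) \<le> 2 * poi s m" for m
    proof -
      have "cmod (z ^ m - 1) \<le> cmod (z ^ m) + 1" using norm_triangle_ineq4[of "z^m" 1] by simp
      also have "\<dots> \<le> 2" using z by (simp add: norm_power power_le_one)
      finally have "cmod (z ^ m - 1) \<le> 2" .
      then have "poi s m * cmod (z ^ m - 1) \<le> poi s m * 2"
        by (rule mult_left_mono) (rule poi_nonneg[OF s])
      then show ?thesis using poi_nonneg[OF s, of m] by (simp add: norm_mult mult.commute)
    qed
    then show "\<exists>N. \<forall>n\<ge>N. norm (?p n * (z ^ n - 1)) \<le> 2 * poi s n" by blast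
    show "summable (\<lambda>m. 2 * poi s m)" by (rule summable_mult[OF sums_summable[OF poi_sums]])
  qed
  have l1: "(\<lambda>N. \<Sum>m\<le>N. ?p m * (z ^ m - 1)) \<longlonglongrightarrow> (\<Sum>m. ?p m * (z ^ m - 1))"
    by (rule summable_LIMSEQ'[OF sp])
  have l2: "(\<lambda>N. (z ^ N - 1) * ?T N) \<longlonglongrightarrow> 0"
  proof (rule tendsto_0_le[of "\<lambda>N. tl_poi s N" _ _ 2])
    show "tl_poi s \<longlonglongrightarrow> 0" by (rule tl_poi_lim)
    have "norm ((z ^ N - 1) * ?T N) \<le> norm (tl_poi s N) * 2" for N
    proof -
      have "cmod (z ^ N - 1) \<le> cmod (z ^ N) + 1" using norm_triangle_ineq4[of "z^N" 1] by simp
      also have "\<dots> \<le> 2" using z by (simp add: norm_power power_le_one)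
      finally have "cmod (z ^ N - 1) \<le> 2" .
      then show ?thesis by (simp add: norm_mult mult.commute) (metis abs_ge_zero mult_left_mono mult.commute)
    qed
    then show "\<forall>\<^sub>F N in sequentially. norm ((z ^ N - 1) * ?T N) \<le> norm (tl_poi s N) * 2" by simp
  qed
  have "(\<lambda>N. \<Sum>j<N. (z - 1) * z ^ j * ?T j) \<longlonglongrightarrow> (\<Sum>m. ?p m * (z ^ m - 1)) + 0"
    unfolding part by (rule tendsto_add[OF l1 l2])
  then show ?thesis by (simp add: sums_def)
qed


lemma erlang_pow:
  assumes "i \<le> k"
  shows "(erlang_P k ^\<^sub>m m) $$ (0, i) = (if i = min m k then 1 else 0)"
  using assms
proof (induction m arbitrary: i)
  case 0 then show ?case by (simp add: erlang_P_def)
next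
  case (Suc m)
  let ?A = "erlang_P k"
  have A: "?A \<in> carrier_mat (Suc k) (Suc k)" by (simp add: erlang_P_def)
  have "(?A ^\<^sub>m Suc m) $$ (0, i) = (\<Sum>r<Suc k. (?A ^\<^sub>m m) $$ (0,r) * ?A $$ (r,i))"
    using mult_entry[OF pow_carrier_mat[OF A] A, of 0 i] Suc.prems by simp
  also have "\<dots> = (\<Sum>r<Suc k. (if r = min m k then ?A $$ (r,i) else 0))"
    by (rule sum.cong[OF refl]) (use Suc.IH in auto)
  also have "\<dots> = ?A $$ (min m k, i)" by (simp add: sum.delta')
  also have "\<dots> = (if i = min (Suc m) k then 1 else 0)"
    using Suc.prems by (auto simp: erlang_P_def min_def)
  finally show ?case .
qed

lemma erlang_reach:
  "ctmc_reach (Suc (Suc j)) (\<lambda>_. r) (erlang_P (Suc j)) 0 (Suc j) t = tl_poi (r * t) j"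
proof -
  let ?k = "Suc j"
  let ?A = "erlang_P ?k"
  have A: "?A \<in> carrier_mat (Suc ?k) (Suc ?k)" by (simp add: erlang_P_def)
  have ma: "make_absorbing (Suc ?k) ?A ?k = ?A"
    by (rule eq_matI) (auto simp: make_absorbing_def erlang_P_def)
  have pw: "(?A ^\<^sub>m m) $$ (0, ?k) = (if ?k \<le> m then 1 else 0)" for m
    using erlang_pow[of ?k ?k m] by auto
  have sm: "(\<lambda>m. poi (r*t) m * (?A ^\<^sub>m m) $$ (0,?k)) sums mat_exp_entry (generator (Suc ?k) (\<lambda>_. r) ?A) t 0 ?k"
    by (rule poisson_rep[OF A, of 0 ?k 1]) (auto simp: pw)
  have tls: "(\<lambda>l. poi (r*t) (l + ?k)) sums tl_poi (r*t) j" by (rule tl_poi_sums)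
  have "(\<lambda>l. poi (r*t) (l + ?k) * (?A ^\<^sub>m (l + ?k)) $$ (0,?k)) sums tl_poi (r*t) j"
  proof -
    have p1: "(?A ^\<^sub>m (l + ?k)) $$ (0,?k) = 1" for l by (subst pw) simp
    show ?thesis unfolding p1 mult_1_right by (rule tls)
  qed
  then have "(\<lambda>m. poi (r*t) m * (?A ^\<^sub>m m) $$ (0,?k)) sums (tl_poi (r*t) j + (\<Sum>i<?k. poi (r*t) i * (?A ^\<^sub>m i) $$ (0,?k)))"
    using sums_iff_shift[of "\<lambda>m. poi (r*t) m * (?A ^\<^sub>m m) $$ (0,?k)" ?k] by blast
  moreover have "(\<Sum>i<?k. poi (r*t) i * (?A ^\<^sub>m i) $$ (0,?k)) = 0"
    by (rule sum.neutral) (auto simp: pw)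
  ultimately have "(\<lambda>m. poi (r*t) m * (?A ^\<^sub>m m) $$ (0,?k)) sums tl_poi (r*t) j" by simp
  then show ?thesis using sm ma unfolding ctmc_reach_def by (metis sums_unique2)
qed

lemma diff_erlang_eq: "Diff_erlang c t (Suc j) = \<bar>tl_poi t j - tl_poi (c * t) j\<bar>"
  unfolding Diff_erlang_def scale_rates_def
  using erlang_reach[of j 1 t] erlang_reach[of j c t] by simp


lemma poi_geo_summable:
  fixes z :: complex
  assumes z: "cmod z \<le> 1" and s: "s \<ge> 0"
  shows "summable (\<lambda>m. complex_of_real (poi s m) * (z ^ m - 1))"
proof (rule summable_comparison_test[of _ "\<lambda>m. 2 * poi s m"])
  have "norm (complex_of_real (poi s m) * (z ^ m - 1)) \<le> 2 * poi s m" for m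
  proof -
    have "cmod (z ^ m - 1) \<le> cmod (z ^ m) + 1" using norm_triangle_ineq4[of "z^m" 1] by simp
    also have "\<dots> \<le> 2" using z by (simp add: norm_power power_le_one)
    finally have "cmod (z ^ m - 1) \<le> 2" .
    then have "poi s m * cmod (z ^ m - 1) \<le> poi s m * 2"
      by (rule mult_left_mono) (rule poi_nonneg[OF s])
    then show ?thesis using poi_nonneg[OF s, of m] by (simp add: norm_mult mult.commute)
  qed
  then show "\<exists>N. \<forall>n\<ge>N. norm (complex_of_real (poi s n) * (z ^ n - 1)) \<le> 2 * poi s n" by blast
  show "summable (\<lambda>m. 2 * poi s m)" by (rule summable_mult[OF sums_summable[OF poi_sums]])
qed

lemma diag_pow_entry:
  fixes D :: "complex mat"
  assumes D: "D \<in> carrier_mat n n" and dg: "diagonal_mat D" and k: "k < n" and l: "l < n"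
  shows "(D ^\<^sub>m m) $$ (k,l) = (if k = l then D $$ (k,k) ^ m else 0)"
  using k l
proof (induction m arbitrary: l)
  case 0 then show ?case using D by simp
next
  case (Suc m)
  have "(D ^\<^sub>m Suc m) $$ (k,l) = (\<Sum>r<n. (D ^\<^sub>m m) $$ (k,r) * D $$ (r,l))"
    using mult_entry[OF pow_carrier_mat[OF D] D k Suc.prems(2)] by simp
  also have "\<dots> = (\<Sum>r<n. if r = k then D $$ (k,k) ^ m * D $$ (k,l) else 0)"
    by (rule sum.cong[OF refl]) (use Suc.IH k in auto)
  also have "\<dots> = D $$ (k,k) ^ m * D $$ (k,l)" using k by (simp add: sum.delta)
  also have "\<dots> = (if k = l then D $$ (k,k) ^ Suc m else 0)"
    using dg D k Suc.prems(2) unfolding diagonal_mat_def by auto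
  finally show ?case .
qed

lemma eig_bound:
  fixes P :: "real mat" and S Sinv D :: "complex mat"
  assumes P: "P \<in> carrier_mat n n" and S: "S \<in> carrier_mat n n" and Sinv: "Sinv \<in> carrier_mat n n"
    and D: "D \<in> carrier_mat n n" and dg: "diagonal_mat D"
    and P_nonneg: "\<forall>i<n. \<forall>j<n. P $$ (i,j) \<ge> 0"
    and P_stoch: "\<forall>i<n. (\<Sum>j<n. P $$ (i,j)) = 1"
    and S_inv2: "Sinv * S = 1\<^sub>m n"
    and diag: "map_mat complex_of_real P = S * D * Sinv"
    and i: "i < n"
  shows "cmod (D $$ (i,i)) \<le> 1"
proof -
  let ?Pc = "map_mat complex_of_real P"
  have Pc: "?Pc \<in> carrier_mat n n" using P by simp
  have PS: "?Pc * S = S * D"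
  proof -
    have "?Pc * S = S * D * Sinv * S" unfolding diag ..
    also have "\<dots> = S * D * (Sinv * S)" using S D Sinv by (simp add: assoc_mult_mat[of _ n n _ n _ n])
    also have "\<dots> = S * D" using S D by (simp add: S_inv2)
    finally show ?thesis .
  qed
  have eig: "(\<Sum>k<n. complex_of_real (P $$ (r,k)) * S $$ (k,i)) = S $$ (r,i) * D $$ (i,i)" if r: "r < n" for r
  proof -
    have "(\<Sum>k<n. complex_of_real (P $$ (r,k)) * S $$ (k,i)) = (?Pc * S) $$ (r,i)"
      using mult_entry[OF Pc S r i] P r by simp
    also have "\<dots> = (S * D) $$ (r,i)" by (simp add: PS)
    also have "\<dots> = (\<Sum>k<n. S $$ (r,k) * D $$ (k,i))" by (rule mult_entry[OF S D r i])
    also have "\<dots> = (\<Sum>k<n. if k = i then S $$ (r,i) * D $$ (i,i) else 0)"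
      by (rule sum.cong[OF refl]) (use dg D i in \<open>auto simp: diagonal_mat_def\<close>)
    also have "\<dots> = S $$ (r,i) * D $$ (i,i)" using i by (simp add: sum.delta')
    finally show ?thesis .
  qed
  have nz: "\<exists>r<n. S $$ (r,i) \<noteq> 0"
  proof (rule ccontr)
    assume "\<not> ?thesis"
    then have "(Sinv * S) $$ (i,i) = 0" using mult_entry[OF Sinv S i i] by simp
    then show False using S_inv2 i by simp
  qed
  define M where "M = Max ((\<lambda>r. cmod (S $$ (r,i))) ` {..<n})"
  have fin: "finite ((\<lambda>r. cmod (S $$ (r,i))) ` {..<n})" "(\<lambda>r. cmod (S $$ (r,i))) ` {..<n} \<noteq> {}"
    using i by auto
  obtain m where m: "m < n" "M = cmod (S $$ (m,i))"
    using Max_in[OF fin] unfolding M_def by auto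
  have Mge: "cmod (S $$ (r,i)) \<le> M" if "r < n" for r
    unfolding M_def using fin that by (intro Max_ge) auto
  have Mpos: "M > 0" using nz Mge by (meson less_le_trans zero_less_norm_iff)
  have "cmod (D $$ (i,i)) * M = cmod (\<Sum>k<n. complex_of_real (P $$ (m,k)) * S $$ (k,i))"
    using eig[OF m(1)] m(2) by (simp add: norm_mult mult.commute)
  also have "\<dots> \<le> (\<Sum>k<n. cmod (complex_of_real (P $$ (m,k)) * S $$ (k,i)))"
    by (rule norm_sum)
  also have "\<dots> \<le> (\<Sum>k<n. P $$ (m,k) * M)"
  proof (rule sum_mono)
    fix k assume "k \<in> {..<n}"
    then have k: "k < n" by simp
    have "cmod (complex_of_real (P $$ (m,k)) * S $$ (k,i)) = P $$ (m,k) * cmod (S $$ (k,i))"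
      using P_nonneg m(1) k by (simp add: norm_mult)
    also have "\<dots> \<le> P $$ (m,k) * M"
      by (rule mult_left_mono[OF Mge[OF k]]) (use P_nonneg m(1) k in auto)
    finally show "cmod (complex_of_real (P $$ (m,k)) * S $$ (k,i)) \<le> P $$ (m,k) * M" .
  qed
  also have "\<dots> = M" using P_stoch m(1) by (simp add: sum_distrib_right[symmetric])
  finally have "cmod (D $$ (i,i)) * M \<le> 1 * M" by simp
  then show ?thesis using Mpos by (meson mult_le_cancel_right_pos)
qed

theorem proposition7:
  fixes n :: nat and P :: "real mat" and S Sinv D :: "complex mat"
    and \<delta> t :: real
  defines "g \<equiv> n - 1"
    and "c \<equiv> exp \<delta>"
    and "lam \<equiv> (\<lambda>i. D $$ (i,i))"
    and "a \<equiv> order 1 (char_poly (map_mat complex_of_real P))"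
  assumes n: "n \<ge> 1"
    and P: "P \<in> carrier_mat n n"
    and P_nonneg: "\<forall>i<n. \<forall>j<n. P $$ (i,j) \<ge> 0"
    and P_stoch: "\<forall>i<n. (\<Sum>j<n. P $$ (i,j)) = 1"
    and g_abs: "P $$ (g,g) = 1"
    and fail_abs: "\<forall>s<n. \<not> reachable n P s g \<longrightarrow> P $$ (s,s) = 1"
    and fail_unique: "card {s. s < n \<and> \<not> reachable n P s g} \<le> 1"
    and S: "S \<in> carrier_mat n n" and Sinv: "Sinv \<in> carrier_mat n n"
    and D: "D \<in> carrier_mat n n" and D_diag: "diagonal_mat D"
    and S_inv1: "S * Sinv = 1\<^sub>m n" and S_inv2: "Sinv * S = 1\<^sub>m n"
    and diag: "map_mat complex_of_real P = S * D * Sinv"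
    and sorted: "\<forall>i j. i \<le> j \<and> j < n \<longrightarrow> cmod (lam j) \<le> cmod (lam i)"
    and ones: "\<forall>i<a. lam i = 1"
    and \<delta>: "\<delta> > 0" and t: "t \<ge> 0"
  shows "\<bar>ctmc_reach n (scale_rates c (\<lambda>_. 1)) P 0 g t - ctmc_reach n (\<lambda>_. 1) P 0 g t\<bar>
    \<le> real (n - a) * (MAX i\<in>{a..<n}. cmod (S $$ (0,i) * Sinv $$ (i,g) * (lam i - 1)))
        * (\<Sum>k. cmod (lam a) ^ k * Diff_erlang c t (Suc k))"
proof -
  have gn: "g < n" using n by (simp add: g_def)
  have n0: "0 < n" using n by simp
  have grow: "P $$ (g,j) = 0" if j: "j < n" "j \<noteq> g" for j
  proof -
    have "(\<Sum>k<n. P $$ (g,k)) = P $$ (g,g) + (\<Sum>k\<in>{..<n} - {g}. P $$ (g,k))"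
      using gn by (simp add: sum.remove)
    then have z: "(\<Sum>k\<in>{..<n} - {g}. P $$ (g,k)) = 0" using P_stoch gn g_abs by simp
    have "\<forall>k\<in>{..<n} - {g}. P $$ (g,k) = 0"
      using iffD1[OF sum_nonneg_eq_0_iff z] P_nonneg gn by auto
    then show ?thesis using j by auto
  qed
  have ma: "make_absorbing n P g = P"
    by (rule eq_matI) (use P grow g_abs in \<open>auto simp: make_absorbing_def\<close>)
  define w where "w i = S $$ (0,i) * Sinv $$ (i,g)" for i
  have lam_le: "cmod (lam i) \<le> 1" if "i < n" for i
    unfolding lam_def by (rule eig_bound[OF P S Sinv D D_diag P_nonneg P_stoch S_inv2 diag that])
  have pw: "complex_of_real ((P ^\<^sub>m m) $$ (0,g)) = (\<Sum>i<n. w i * lam i ^ m)" for m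
  proof -
    have wit: "similar_mat_wit (map_mat complex_of_real P) D S Sinv"
      unfolding similar_mat_wit_def Let_def using P S Sinv D S_inv1 S_inv2 diag by auto
    have "map_mat complex_of_real (P ^\<^sub>m m) = (map_mat complex_of_real P) ^\<^sub>m m"
      by (rule of_real_hom.mat_hom_pow[OF P])
    also have "\<dots> = S * D ^\<^sub>m m * Sinv" by (rule similar_mat_wit_pow_id[OF wit])
    finally have e: "map_mat complex_of_real (P ^\<^sub>m m) = S * D ^\<^sub>m m * Sinv" .
    have SD: "S * D ^\<^sub>m m \<in> carrier_mat n n" using S D by simp
    have "complex_of_real ((P ^\<^sub>m m) $$ (0,g)) = (S * D ^\<^sub>m m * Sinv) $$ (0,g)"
      using arg_cong[OF e, of "\<lambda>M. M $$ (0,g)"] P n0 gn by simp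
    also have "\<dots> = (\<Sum>l<n. (S * D ^\<^sub>m m) $$ (0,l) * Sinv $$ (l,g))"
      by (rule mult_entry[OF SD Sinv n0 gn])
    also have "\<dots> = (\<Sum>l<n. w l * lam l ^ m)"
    proof (rule sum.cong[OF refl])
      fix l assume "l \<in> {..<n}"
      then have l: "l < n" by simp
      have "(S * D ^\<^sub>m m) $$ (0,l) = (\<Sum>k<n. S $$ (0,k) * (D ^\<^sub>m m) $$ (k,l))"
        by (rule mult_entry[OF S pow_carrier_mat[OF D] n0 l])
      also have "\<dots> = (\<Sum>k<n. if k = l then S $$ (0,l) * lam l ^ m else 0)"
        by (rule sum.cong[OF refl]) (auto simp: diag_pow_entry[OF D D_diag _ l] lam_def)
      also have "\<dots> = S $$ (0,l) * lam l ^ m" using l by (simp add: sum.delta')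
      finally show "(S * D ^\<^sub>m m) $$ (0,l) * Sinv $$ (l,g) = w l * lam l ^ m"
        by (simp add: w_def mult_ac)
    qed
    finally show ?thesis .
  qed
  have bnd: "\<bar>(P ^\<^sub>m m) $$ (0,g)\<bar> \<le> (\<Sum>i<n. cmod (w i))" for m
  proof -
    have "\<bar>(P ^\<^sub>m m) $$ (0,g)\<bar> = cmod (\<Sum>i<n. w i * lam i ^ m)"
      using pw[of m] by (metis norm_of_real)
    also have "\<dots> \<le> (\<Sum>i<n. cmod (w i * lam i ^ m))" by (rule norm_sum)
    also have "\<dots> \<le> (\<Sum>i<n. cmod (w i))"
    proof (rule sum_mono)
      fix i assume "i \<in> {..<n}"
      then have "cmod (lam i) ^ m \<le> 1" using lam_le by (simp add: power_le_one)
      then show "cmod (w i * lam i ^ m) \<le> cmod (w i)"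
        by (simp add: norm_mult norm_power mult_left_le)
    qed
    finally show ?thesis .
  qed
  define X where "X i s = (\<Sum>m. complex_of_real (poi s m) * (lam i ^ m - 1))" for i s
  have rep: "complex_of_real (ctmc_reach n (\<lambda>_. r) P 0 g t) = (\<Sum>i<n. w i) + (\<Sum>i<n. w i * X i (r*t))"
    if r: "r \<ge> 0" for r
  proof -
    have rt: "r * t \<ge> 0" using r t by simp
    have s1: "(\<lambda>m. poi (r*t) m * (P ^\<^sub>m m) $$ (0,g)) sums ctmc_reach n (\<lambda>_. r) P 0 g t"
      unfolding ctmc_reach_def ma by (rule poisson_rep[OF P n0 gn bnd])
    have s2: "(\<lambda>m. complex_of_real (poi (r*t) m * (P ^\<^sub>m m) $$ (0,g))) sums complex_of_real (ctmc_reach n (\<lambda>_. r) P 0 g t)"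
      by (rule sums_of_real[OF s1])
    have p1: "(\<lambda>m. complex_of_real (poi (r*t) m)) sums 1"
      using sums_of_real[OF poi_sums[of "r*t"]] by simp
    have s3: "(\<lambda>m. (\<Sum>i<n. w i) * complex_of_real (poi (r*t) m) + (\<Sum>i<n. w i * (complex_of_real (poi (r*t) m) * (lam i ^ m - 1))))
       sums ((\<Sum>i<n. w i) * 1 + (\<Sum>i<n. w i * X i (r*t)))"
    proof (rule sums_add)
      show "(\<lambda>m. (\<Sum>i<n. w i) * complex_of_real (poi (r*t) m)) sums ((\<Sum>i<n. w i) * 1)"
        by (rule sums_mult[OF p1])
      show "(\<lambda>m. \<Sum>i<n. w i * (complex_of_real (poi (r*t) m) * (lam i ^ m - 1))) sums (\<Sum>i<n. w i * X i (r*t))"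
      proof (rule sums_sum)
        fix i assume "i \<in> {..<n}"
        then have "cmod (lam i) \<le> 1" using lam_le by simp
        then show "(\<lambda>m. w i * (complex_of_real (poi (r*t) m) * (lam i ^ m - 1))) sums (w i * X i (r*t))"
          unfolding X_def by (intro sums_mult summable_sums poi_geo_summable rt)
      qed
    qed
    have eq: "complex_of_real (poi (r*t) m * (P ^\<^sub>m m) $$ (0,g))
       = (\<Sum>i<n. w i) * complex_of_real (poi (r*t) m) + (\<Sum>i<n. w i * (complex_of_real (poi (r*t) m) * (lam i ^ m - 1)))" for m
    proof -
      have "(\<Sum>i<n. w i) * complex_of_real (poi (r*t) m) + (\<Sum>i<n. w i * (complex_of_real (poi (r*t) m) * (lam i ^ m - 1)))
          = (\<Sum>i<n. w i * (complex_of_real (poi (r*t) m) * lam i ^ m))"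
        by (simp add: sum_distrib_right sum.distrib[symmetric] algebra_simps)
      also have "\<dots> = complex_of_real (poi (r*t) m) * complex_of_real ((P ^\<^sub>m m) $$ (0,g))"
        unfolding pw by (simp add: sum_distrib_left mult_ac)
      finally show ?thesis by simp
    qed
    show ?thesis using s2 s3 unfolding eq by (simp add: sums_unique2)
  qed
  have Xt: "(\<lambda>j. (lam i - 1) * lam i ^ j * complex_of_real (tl_poi s j)) sums X i s"
    if "i < n" "s \<ge> 0" for i s
    unfolding X_def by (rule tele[OF lam_le[OF that(1)] that(2)])
  have cpos: "c > 0" unfolding c_def by simp
  have ct: "c * t \<ge> 0" using cpos t by simp
  define Pc where "Pc = ctmc_reach n (scale_rates c (\<lambda>_. 1)) P 0 g t"
  define P1 where "P1 = ctmc_reach n (\<lambda>_. 1) P 0 g t"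
  have Pc': "Pc = ctmc_reach n (\<lambda>_. c) P 0 g t" unfolding Pc_def scale_rates_def by simp
  define f where "f j = (\<Sum>i<n. w i * ((lam i - 1) * lam i ^ j * complex_of_real (tl_poi (c*t) j - tl_poi t j)))" for j
  have fs: "f sums complex_of_real (Pc - P1)"
  proof -
    have "complex_of_real (Pc - P1) = (\<Sum>i<n. w i * (X i (c*t) - X i t))"
      using rep[of c] rep[of 1] cpos unfolding Pc' P1_def
      by (simp add: right_diff_distrib sum_subtractf)
    moreover have "f sums (\<Sum>i<n. w i * (X i (c*t) - X i t))"
      unfolding f_def
    proof (rule sums_sum)
      fix i assume "i \<in> {..<n}"
      then have i: "i < n" by simp
      have "(\<lambda>j. (lam i - 1) * lam i ^ j * complex_of_real (tl_poi (c*t) j) - (lam i - 1) * lam i ^ j * complex_of_real (tl_poi t j))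
          sums (X i (c*t) - X i t)"
        by (rule sums_diff[OF Xt[OF i ct] Xt[OF i t]])
      then have "(\<lambda>j. w i * ((lam i - 1) * lam i ^ j * complex_of_real (tl_poi (c*t) j) - (lam i - 1) * lam i ^ j * complex_of_real (tl_poi t j)))
          sums (w i * (X i (c*t) - X i t))"
        by (rule sums_mult)
      then show "(\<lambda>j. w i * ((lam i - 1) * lam i ^ j * complex_of_real (tl_poi (c*t) j - tl_poi t j))) sums (w i * (X i (c*t) - X i t))"
        by (simp add: right_diff_distrib)
    qed
    ultimately show ?thesis by simp
  qed
  show ?thesis
  proof (cases "a < n")
    case False
    have "f j = 0" for j unfolding f_def using ones False by simp
    then have "f = (\<lambda>_. 0)" by auto
    then have "(\<lambda>_. 0) sums complex_of_real (Pc - P1)" using fs by simp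
    then have "complex_of_real (Pc - P1) = 0" using sums_zero sums_unique2 by blast
    then have "Pc - P1 = 0" by simp
    then show ?thesis using False unfolding Pc_def[symmetric] P1_def[symmetric] by simp
  next
    case True
    define C where "C = (MAX i\<in>{a..<n}. cmod (S $$ (0,i) * Sinv $$ (i,g) * (lam i - 1)))"
    define L where "L = cmod (lam a)"
    have Cge: "cmod (w i * (lam i - 1)) \<le> C" if "i \<in> {a..<n}" for i
      unfolding C_def w_def using that by (intro Max_ge) auto
    have L1: "L \<le> 1" unfolding L_def using lam_le True by simp
    have L0: "L \<ge> 0" unfolding L_def by simp
    have lamL: "cmod (lam i) \<le> L" if "a \<le> i" "i < n" for i
      unfolding L_def using sorted that by blast
    define h where "h j = real (n - a) * C * (L ^ j * Diff_erlang c t (Suc j))" for j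
    have fn: "norm (f j) \<le> h j" for j
    proof -
      let ?tm = "\<lambda>i. w i * ((lam i - 1) * lam i ^ j * complex_of_real (tl_poi (c*t) j - tl_poi t j))"
      have "f j = (\<Sum>i\<in>{a..<n}. ?tm i)"
        unfolding f_def by (rule sum.mono_neutral_right) (use ones in auto)
      then have "norm (f j) \<le> (\<Sum>i\<in>{a..<n}. norm (?tm i))" by (simp add: norm_sum)
      also have "\<dots> \<le> (\<Sum>i\<in>{a..<n}. C * (L ^ j * Diff_erlang c t (Suc j)))"
      proof (rule sum_mono)
        fix i assume i: "i \<in> {a..<n}"
        have "norm (?tm i) = cmod (w i * (lam i - 1)) * (cmod (lam i) ^ j * \<bar>tl_poi (c*t) j - tl_poi t j\<bar>)"
          by (simp add: norm_mult norm_power mult_ac del: of_real_diff)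
        also have "\<dots> \<le> C * (L ^ j * Diff_erlang c t (Suc j))"
          unfolding diff_erlang_eq
          by (intro mult_mono Cge i power_mono lamL) (use i L0 order_trans[OF norm_ge_zero Cge[OF i]] in \<open>auto simp: abs_minus_commute\<close>)
        finally show "norm (?tm i) \<le> C * (L ^ j * Diff_erlang c t (Suc j))" .
      qed
      also have "\<dots> = h j" by (simp add: h_def)
      finally show ?thesis .
    qed
    have dsum: "summable (\<lambda>j. L ^ j * Diff_erlang c t (Suc j))"
    proof (rule summable_comparison_test[of _ "\<lambda>j. tl_poi t j + tl_poi (c*t) j"])
      have "norm (L ^ j * Diff_erlang c t (Suc j)) \<le> tl_poi t j + tl_poi (c*t) j" for j
      proof -
        have "norm (L ^ j * Diff_erlang c t (Suc j)) = L ^ j * Diff_erlang c t (Suc j)"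
          using L0 by (simp add: Diff_erlang_def abs_mult)
        also have "\<dots> \<le> 1 * Diff_erlang c t (Suc j)"
          by (rule mult_right_mono) (use L0 L1 in \<open>auto simp: power_le_one Diff_erlang_def\<close>)
        also have "\<dots> \<le> tl_poi t j + tl_poi (c*t) j"
          unfolding diff_erlang_eq using tl_poi_nonneg[OF t, of j] tl_poi_nonneg[OF ct, of j] by simp
        finally show ?thesis .
      qed
      then show "\<exists>N. \<forall>j\<ge>N. norm (L ^ j * Diff_erlang c t (Suc j)) \<le> tl_poi t j + tl_poi (c*t) j" by blast
      show "summable (\<lambda>j. tl_poi t j + tl_poi (c*t) j)"
        by (intro summable_add tl_poi_summable t ct)
    qed
    have hs: "summable h" unfolding h_def by (rule summable_mult[OF dsum])
    have nfs: "summable (\<lambda>j. norm (f j))"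
      by (rule summable_comparison_test[OF _ hs]) (use fn in auto)
    have "\<bar>Pc - P1\<bar> = cmod (suminf f)" using sums_unique[OF fs] by (metis norm_of_real)
    also have "\<dots> \<le> (\<Sum>j. norm (f j))" by (rule summable_norm[OF nfs])
    also have "\<dots> \<le> suminf h" by (rule suminf_le[OF fn nfs hs])
    also have "\<dots> = real (n - a) * C * (\<Sum>j. L ^ j * Diff_erlang c t (Suc j))"
      unfolding h_def by (rule suminf_mult[OF dsum])
    finally show ?thesis unfolding Pc_def P1_def C_def L_def .
  qed
qed

end
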